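(* Let $K$ be a totally real number field, $A$ a totally definite quaternion algebra over $K$, $\Lambda$ a maximal order of $A$, and let $\ell=\ell_1^2\ell_2$ where $\ell_1,\ell_2$ are positive integers and $\ell_2$ is square-free. If there exists an Arakelov-modular lattice of level $\ell_2$ over $\Lambda$, then there exists an Arakelov-modular lattice of level $\ell$ over $\Lambda$.
   Context: $A=\left(\frac{a,b}{K}\right)$ has $K$-basis $1,i,j,ij$, $i^2=a$, $j^2=b$, $ij=-ji$; conjugation $\overline{x_0+x_1i+x_2j+x_3ij}=x_0-x_1i-x_2j-x_3ij$; $\mathrm{tr}_{A/K}(x)=x+\bar x$; totally definite means $A\otimes_{K,\sigma}\mathbb{R}$ is the Hamilton quaternions for every real embedding $\sigma$. Ideals of $A$: finitely generated $\mathcal{O}_K$-submodules $I$ with $KI=A$; orders: ideals that are subrings with 1; maximal orders: maximal under inclusion. $\mathcal{LR}(\Lambda)$: ideals $J$ with $\{x:xJ\subseteq J\}=\{x:Jx\subseteq J\}=\Lambda$. $N(\Lambda)=\{x\in A^\times:x\Lambda x^{-1}=\Lambda\}$. For totally positive $\alpha\in K^\times$, $q_\alpha(x,y)=\mathrm{Tr}_{K/\mathbb{Q}}(\mathrm{tr}_{A/K}(\alpha x\bar y))$ extended to $A\otimes_{\mathbb{Q}}\mathbb{R}$. An ideal lattice over $\Lambda$ is $(I,q_\alpha)$ with $I=Jt$, $J\in\mathcal{LR}(\Lambda)$, $t\in A^\times$; dual $I^*=\{x\in A\otimes\mathbb{R}:q_\alpha(x,y)\in\mathbb{Z}\ \forall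 y\in I\}$. For a positive integer $m$, $(I,q_\alpha)$ is Arakelov-modular of level $m$ if there exist $J\in\mathcal{LR}(\Lambda)$, $t\in A^\times$ with $I=Jt$ and $\beta\in N(\Lambda)\cap\Lambda$ with $m=\beta\bar\beta$ and $I=I^*\bar t\beta\bar t^{-1}$. *)

theory Defs
  imports Complex_Main "HOL-Computational_Algebra.Polynomial" "HOL-Computational_Algebra.Squarefree"
begin

definition number_field :: "complex set \<Rightarrow> bool" where
  "number_field K \<longleftrightarrow> 0 \<in> K \<and> 1 \<in> K \<and>
     (\<forall>x\<in>K. \<forall>y\<in>K. x + y \<in> K \<and> x * y \<in> K) \<and>
     (\<forall>x\<in>K. - x \<in> K \<and> inverse x \<in> K) \<and>
     (\<exists>bs :: complex list. set bs \<subseteq> K \<and>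
        (\<forall>x\<in>K. \<exists>q :: nat \<Rightarrow> rat. x = (\<Sum>i<length bs. of_rat (q i) * bs ! i)))"

definition embeddings :: "complex set \<Rightarrow> (complex \<Rightarrow> complex) set" where
  "embeddings K = {\<sigma>. \<sigma> 1 = 1 \<and> (\<forall>x\<in>K. \<forall>y\<in>K. \<sigma> (x + y) = \<sigma> x + \<sigma> y \<and> \<sigma> (x * y) = \<sigma> x * \<sigma> y)
                      \<and> (\<forall>x. x \<notin> K \<longrightarrow> \<sigma> x = 0)}"

definition totally_real :: "complex set \<Rightarrow> bool" where
  "totally_real K \<longleftrightarrow> (\<forall>\<sigma>\<in>embeddings K. \<forall>x\<in>K. \<sigma> x \<in> \<real>)"

definition totally_positive :: "complex set \<Rightarrow> complex \<Rightarrow> bool" where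
  "totally_positive K \<alpha> \<longleftrightarrow> \<alpha> \<in> K \<and> (\<forall>\<sigma>\<in>embeddings K. \<sigma> \<alpha> \<in> \<real> \<and> Re (\<sigma> \<alpha>) > 0)"

definition ring_of_integers :: "complex set \<Rightarrow> complex set" where
  "ring_of_integers K = {x \<in> K. \<exists>p :: int poly. lead_coeff p = 1 \<and> poly (map_poly of_int p) x = 0}"

section \<open>Quaternion algebras (a,b / F) with basis 1, i, j, ij\<close>

record 'f quat =
  q0 :: 'f
  q1 :: 'f
  q2 :: 'f
  q3 :: 'f

definition qmk :: "'f \<Rightarrow> 'f \<Rightarrow> 'f \<Rightarrow> 'f \<Rightarrow> 'f quat" where
  "qmk x0 x1 x2 x3 = \<lparr>q0 = x0, q1 = x1, q2 = x2, q3 = x3\<rparr>"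

definition qzero :: "'f::zero quat" where "qzero = qmk 0 0 0 0"
definition qone :: "'f::{zero,one} quat" where "qone = qmk 1 0 0 0"
definition qof :: "'f::zero \<Rightarrow> 'f quat" where "qof c = qmk c 0 0 0"

definition qadd :: "'f::plus quat \<Rightarrow> 'f quat \<Rightarrow> 'f quat" where
  "qadd x y = qmk (q0 x + q0 y) (q1 x + q1 y) (q2 x + q2 y) (q3 x + q3 y)"

definition qscal :: "'f::times \<Rightarrow> 'f quat \<Rightarrow> 'f quat" where
  "qscal c x = qmk (c * q0 x) (c * q1 x) (c * q2 x) (c * q3 x)"

definition qconj :: "'f::uminus quat \<Rightarrow> 'f quat" where
  "qconj x = qmk (q0 x) (- q1 x) (- q2 x) (- q3 x)"

text \<open>Multiplication in (a,b / F): i^2 = a, j^2 = b, ij = -ji.\<close>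
definition qmul :: "'f::comm_ring \<Rightarrow> 'f \<Rightarrow> 'f quat \<Rightarrow> 'f quat \<Rightarrow> 'f quat" where
  "qmul a b x y = qmk
     (q0 x * q0 y + a * q1 x * q1 y + b * q2 x * q2 y - a * b * q3 x * q3 y)
     (q0 x * q1 y + q1 x * q0 y - b * q2 x * q3 y + b * q3 x * q2 y)
     (q0 x * q2 y + q2 x * q0 y + a * q1 x * q3 y - a * q3 x * q1 y)
     (q0 x * q3 y + q3 x * q0 y + q1 x * q2 y - q2 x * q1 y)"

text \<open>Reduced trace tr(x) = x + conj x (an element of the centre, read off its 1-coordinate).\<close>
definition qtr :: "'f::{plus,uminus} quat \<Rightarrow> 'f" where
  "qtr x = q0 (qadd x (qconj x))"

definition qlin :: "(nat \<Rightarrow> 'f::comm_ring) \<Rightarrow> 'f quat list \<Rightarrow> 'f quat" where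
  "qlin c gs = qmk (\<Sum>i<length gs. c i * q0 (gs ! i)) (\<Sum>i<length gs. c i * q1 (gs ! i))
                   (\<Sum>i<length gs. c i * q2 (gs ! i)) (\<Sum>i<length gs. c i * q3 (gs ! i))"

definition qalg :: "complex set \<Rightarrow> complex quat set" where
  "qalg K = {x. q0 x \<in> K \<and> q1 x \<in> K \<and> q2 x \<in> K \<and> q3 x \<in> K}"

text \<open>Hamilton quaternions are (-1,-1 / R). A is totally definite iff for every
  real embedding sigma, (sigma a, sigma b / R) is isomorphic as R-algebra to them.\<close>
definition totally_definite :: "complex set \<Rightarrow> complex \<Rightarrow> complex \<Rightarrow> bool" where
  "totally_definite K a b \<longleftrightarrow> (\<forall>\<sigma>\<in>embeddings K.
     \<exists>f :: real quat \<Rightarrow> real quat. bij f \<and>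
        (\<forall>x y. f (qadd x y) = qadd (f x) (f y)) \<and>
        (\<forall>c x. f (qscal c x) = qscal c (f x)) \<and>
        (\<forall>x y. f (qmul (Re (\<sigma> a)) (Re (\<sigma> b)) x y) = qmul (-1) (-1) (f x) (f y)))"

text \<open>Ideals of A: finitely generated O_K-submodules I of A with K I = A.\<close>
definition qideal :: "complex set \<Rightarrow> complex quat set \<Rightarrow> bool" where
  "qideal K I \<longleftrightarrow> I \<subseteq> qalg K \<and>
     (\<exists>gs :: complex quat list. I = {qlin c gs | c. \<forall>i. c i \<in> ring_of_integers K}) \<and>
     qalg K = {qlin c xs | c xs. set xs \<subseteq> I \<and> (\<forall>i. c i \<in> K)}"

definition qorder :: "complex set \<Rightarrow> complex \<Rightarrow> complex \<Rightarrow> complex quat set \<Rightarrow> bool" where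
  "qorder K a b \<Lambda> \<longleftrightarrow> qideal K \<Lambda> \<and> qone \<in> \<Lambda> \<and>
     (\<forall>x\<in>\<Lambda>. \<forall>y\<in>\<Lambda>. qadd x y \<in> \<Lambda> \<and> qmul a b x y \<in> \<Lambda>)"

definition maximal_order :: "complex set \<Rightarrow> complex \<Rightarrow> complex \<Rightarrow> complex quat set \<Rightarrow> bool" where
  "maximal_order K a b \<Lambda> \<longleftrightarrow> qorder K a b \<Lambda> \<and>
     (\<forall>\<Gamma>. qorder K a b \<Gamma> \<and> \<Lambda> \<subseteq> \<Gamma> \<longrightarrow> \<Gamma> = \<Lambda>)"

definition left_order :: "complex set \<Rightarrow> complex \<Rightarrow> complex \<Rightarrow> complex quat set \<Rightarrow> complex quat set" where
  "left_order K a b J = {x \<in> qalg K. \<forall>y\<in>J. qmul a b x y \<in> J}"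

definition right_order :: "complex set \<Rightarrow> complex \<Rightarrow> complex \<Rightarrow> complex quat set \<Rightarrow> complex quat set" where
  "right_order K a b J = {x \<in> qalg K. \<forall>y\<in>J. qmul a b y x \<in> J}"

definition LR :: "complex set \<Rightarrow> complex \<Rightarrow> complex \<Rightarrow> complex quat set \<Rightarrow> complex quat set set" where
  "LR K a b \<Lambda> = {J. qideal K J \<and> left_order K a b J = \<Lambda> \<and> right_order K a b J = \<Lambda>}"

definition qunit :: "complex set \<Rightarrow> complex \<Rightarrow> complex \<Rightarrow> complex quat \<Rightarrow> bool" where
  "qunit K a b x \<longleftrightarrow> x \<in> qalg K \<and> (\<exists>y\<in>qalg K. qmul a b x y = qone \<and> qmul a b y x = qone)"

definition qinverse :: "complex set \<Rightarrow> complex \<Rightarrow> complex \<Rightarrow> complex quat \<Rightarrow> complex quat" where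
  "qinverse K a b x = (SOME y. y \<in> qalg K \<and> qmul a b x y = qone \<and> qmul a b y x = qone)"

definition normalizer :: "complex set \<Rightarrow> complex \<Rightarrow> complex \<Rightarrow> complex quat set \<Rightarrow> complex quat set" where
  "normalizer K a b \<Lambda> = {x. qunit K a b x \<and>
      (\<lambda>l. qmul a b (qmul a b x l) (qinverse K a b x)) ` \<Lambda> = \<Lambda>}"

section \<open>A \<otimes>_Q R = product over the embeddings sigma of A \<otimes>_{K,sigma} R\<close>

definition AR :: "complex set \<Rightarrow> ((complex \<Rightarrow> complex) \<Rightarrow> real quat) set" where
  "AR K = {X. \<forall>\<sigma>. \<sigma> \<notin> embeddings K \<longrightarrow> X \<sigma> = qzero}"

definition iota :: "complex set \<Rightarrow> complex quat \<Rightarrow> (complex \<Rightarrow> complex) \<Rightarrow> real quat" where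
  "iota K x = (\<lambda>\<sigma>. if \<sigma> \<in> embeddings K
       then qmk (Re (\<sigma> (q0 x))) (Re (\<sigma> (q1 x))) (Re (\<sigma> (q2 x))) (Re (\<sigma> (q3 x))) else qzero)"

definition armul :: "complex set \<Rightarrow> complex \<Rightarrow> complex \<Rightarrow> ((complex \<Rightarrow> complex) \<Rightarrow> real quat)
    \<Rightarrow> ((complex \<Rightarrow> complex) \<Rightarrow> real quat) \<Rightarrow> (complex \<Rightarrow> complex) \<Rightarrow> real quat" where
  "armul K a b X Y = (\<lambda>\<sigma>. if \<sigma> \<in> embeddings K
       then qmul (Re (\<sigma> a)) (Re (\<sigma> b)) (X \<sigma>) (Y \<sigma>) else qzero)"

text \<open>q_alpha(x,y) = Tr_{K/Q}(tr_{A/K}(alpha x conj y)), Tr_{K/Q} = sum over embeddings,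
  extended R-bilinearly to A \<otimes>_Q R.\<close>
definition qform :: "complex set \<Rightarrow> complex \<Rightarrow> complex \<Rightarrow> complex \<Rightarrow>
    ((complex \<Rightarrow> complex) \<Rightarrow> real quat) \<Rightarrow> ((complex \<Rightarrow> complex) \<Rightarrow> real quat) \<Rightarrow> real" where
  "qform K a b \<alpha> X Y = (\<Sum>\<sigma>\<in>embeddings K.
      qtr (qmul (Re (\<sigma> a)) (Re (\<sigma> b)) (qscal (Re (\<sigma> \<alpha>)) (X \<sigma>)) (qconj (Y \<sigma>))))"

definition ldual :: "complex set \<Rightarrow> complex \<Rightarrow> complex \<Rightarrow> complex \<Rightarrow> complex quat set
    \<Rightarrow> ((complex \<Rightarrow> complex) \<Rightarrow> real quat) set" where
  "ldual K a b \<alpha> I = {X \<in> AR K. \<forall>y\<in>I. qform K a b \<alpha> X (iota K y) \<in> \<int>}"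

definition ideal_lattice :: "complex set \<Rightarrow> complex \<Rightarrow> complex \<Rightarrow> complex quat set \<Rightarrow> complex \<Rightarrow> complex quat set \<Rightarrow> bool" where
  "ideal_lattice K a b \<Lambda> \<alpha> I \<longleftrightarrow> totally_positive K \<alpha> \<and>
     (\<exists>J t. J \<in> LR K a b \<Lambda> \<and> qunit K a b t \<and> I = (\<lambda>x. qmul a b x t) ` J)"

definition arakelov_modular :: "complex set \<Rightarrow> complex \<Rightarrow> complex \<Rightarrow> complex quat set \<Rightarrow> complex \<Rightarrow> complex quat set \<Rightarrow> nat \<Rightarrow> bool" where
  "arakelov_modular K a b \<Lambda> \<alpha> I m \<longleftrightarrow> 0 < m \<and> totally_positive K \<alpha> \<and>
     (\<exists>J t \<beta>. J \<in> LR K a b \<Lambda> \<and> qunit K a b t \<and> I = (\<lambda>x. qmul a b x t) ` J \<and>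
        \<beta> \<in> normalizer K a b \<Lambda> \<inter> \<Lambda> \<and> qof (of_nat m) = qmul a b \<beta> (qconj \<beta>) \<and>
        iota K ` I = (\<lambda>X. armul K a b X (iota K (qmul a b (qmul a b (qconj t) \<beta>)
                                          (qinverse K a b (qconj t))))) ` ldual K a b \<alpha> I)"

end

theory Submission
  imports Defs
begin

lemma qmul_assoc: "qmul a b (qmul a b x y) z = qmul a b x (qmul a b (y::'f::comm_ring quat) z)"
  by (simp add: qmul_def qmk_def algebra_simps)
lemma qmul_one_l: "qmul a b qone x = (x::'f::comm_ring_1 quat)"
  by (simp add: qmul_def qmk_def qone_def)
lemma qmul_one_r: "qmul a b x qone = (x::'f::comm_ring_1 quat)"
  by (simp add: qmul_def qmk_def qone_def)
lemma qmul_scal_l: "qmul a b (qscal c x) y = qscal c (qmul a b x (y::'f::comm_ring quat))"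
  by (simp add: qmul_def qmk_def qscal_def algebra_simps)
lemma qmul_scal_r: "qmul a b x (qscal c y) = qscal c (qmul a b x (y::'f::comm_ring quat))"
  by (simp add: qmul_def qmk_def qscal_def algebra_simps)
lemma qconj_scal: "qconj (qscal c x) = qscal c (qconj (x::'f::comm_ring quat))"
  by (simp add: qconj_def qmk_def qscal_def)
lemma qscal_scal: "qscal c (qscal d x) = qscal (c*d) (x::'f::comm_ring quat)"
  by (simp add: qmk_def qscal_def algebra_simps)
lemma qscal_one: "qscal 1 x = (x::'f::comm_ring_1 quat)"
  by (simp add: qmk_def qscal_def)
lemma qtr_scal: "qtr (qscal c x) = c * qtr (x::'f::comm_ring quat)"
  by (simp add: qtr_def qadd_def qconj_def qmk_def qscal_def algebra_simps)
lemma qscal_qof: "qscal c (qof x) = qof (c * (x::'f::comm_ring))"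
  by (simp add: qof_def qscal_def qmk_def)
lemma qscal_zero: "qscal (c::real) qzero = qzero"
  by (simp add: qzero_def qscal_def qmk_def)

lemma nf_nat: "number_field K \<Longrightarrow> of_nat n \<in> K"
proof (induction n)
  case 0 then show ?case by (simp add: number_field_def)
next
  case (Suc n) then show ?case unfolding number_field_def
    by (metis of_nat_Suc add.commute)
qed

lemma emb_zero: assumes "\<sigma> \<in> embeddings K" "number_field K" shows "\<sigma> 0 = 0"
proof -
  have "0 \<in> K" using assms(2) by (simp add: number_field_def)
  then have "\<sigma> (0+0) = \<sigma> 0 + \<sigma> 0" using assms(1) unfolding embeddings_def by blast
  then show ?thesis by simp
qed

lemma emb_nat: assumes "\<sigma> \<in> embeddings K" "number_field K" shows "\<sigma> (of_nat n) = of_nat n"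
proof (induction n)
  case 0 then show ?case using emb_zero[OF assms] by simp
next
  case (Suc n)
  have "1 \<in> K" using assms(2) by (simp add: number_field_def)
  then have "\<sigma> (1 + of_nat n) = \<sigma> 1 + \<sigma> (of_nat n)"
    using assms nf_nat[OF assms(2)] by (simp add: embeddings_def)
  also have "\<sigma> 1 = 1" using assms(1) by (simp add: embeddings_def)
  finally show ?case using Suc by (simp add: add.commute)
qed

lemma emb_natmul: assumes "\<sigma> \<in> embeddings K" "number_field K" "0 < n"
  shows "\<sigma> (of_nat n * x) = of_nat n * \<sigma> x"
proof (cases "x \<in> K")
  case True then show ?thesis using assms nf_nat[OF assms(2)] emb_nat[OF assms(1,2)]
    by (simp add: embeddings_def)
next
  case False
  have "of_nat n * x \<notin> K"
  proof
    assume h: "of_nat n * x \<in> K"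
    have "inverse (of_nat n :: complex) \<in> K" using nf_nat[OF assms(2)] assms(2)
      by (simp add: number_field_def)
    then have "inverse (of_nat n) * (of_nat n * x) \<in> K" using h assms(2)
      by (simp add: number_field_def)
    moreover have "inverse (of_nat n) * (of_nat n * x) = x" using assms(3) by simp
    ultimately show False using False by simp
  qed
  then show ?thesis using False assms(1) by (simp add: embeddings_def)
qed

definition scX :: "real \<Rightarrow> ((complex \<Rightarrow> complex) \<Rightarrow> real quat) \<Rightarrow> (complex \<Rightarrow> complex) \<Rightarrow> real quat" where
  "scX r X = (\<lambda>\<sigma>. qscal r (X \<sigma>))"

lemma scX_scX: "scX r (scX s X) = scX (r*s) X"
  by (simp add: scX_def qscal_scal)
lemma scX_one: "scX 1 X = X"
  by (simp add: scX_def qscal_one)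

theorem mainTheorem10:
  fixes K :: "complex set" and a b :: complex and \<Lambda> :: "complex quat set"
    and l1 l2 :: nat
  assumes "number_field K" and "totally_real K"
    and "a \<in> K" and "b \<in> K" and "a \<noteq> 0" and "b \<noteq> 0"
    and "totally_definite K a b"
    and "maximal_order K a b \<Lambda>"
    and "0 < l1" and "0 < l2" and "squarefree l2"
    and "\<exists>I \<alpha>. arakelov_modular K a b \<Lambda> \<alpha> I l2"
  shows "\<exists>I \<alpha>. arakelov_modular K a b \<Lambda> \<alpha> I (l1\<^sup>2 * l2)"
proof -
  note nf = assms(1)
  obtain I \<alpha> where am: "arakelov_modular K a b \<Lambda> \<alpha> I l2" using assms(12) by blast
  then obtain J t \<beta> where tp: "totally_positive K \<alpha>" and J: "J \<in> LR K a b \<Lambda>"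
    and t: "qunit K a b t" and IJ: "I = (\<lambda>x. qmul a b x t) ` J"
    and \<beta>N: "\<beta> \<in> normalizer K a b \<Lambda>" and \<beta>L: "\<beta> \<in> \<Lambda>"
    and \<beta>n: "qof (of_nat l2) = qmul a b \<beta> (qconj \<beta>)"
    and eq: "iota K ` I = (\<lambda>X. armul K a b X (iota K (qmul a b (qmul a b (qconj t) \<beta>)
                                          (qinverse K a b (qconj t))))) ` ldual K a b \<alpha> I"
    unfolding arakelov_modular_def by blast
  define c :: complex where "c = of_nat l1"
  define r :: real where "r = real l1"
  have cK: "c \<in> K" unfolding c_def using nf_nat[OF nf] .
  have c0: "c \<noteq> 0" "r \<noteq> 0" "r > 0" using assms(9) by (auto simp: c_def r_def)
  have icK: "inverse c \<in> K" using cK nf by (simp add: number_field_def)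
  have Kmul: "\<And>x y. x \<in> K \<Longrightarrow> y \<in> K \<Longrightarrow> x * y \<in> K" using nf by (simp add: number_field_def)
  have embc: "\<And>\<sigma> x. \<sigma> \<in> embeddings K \<Longrightarrow> \<sigma> (c * x) = c * \<sigma> x"
    unfolding c_def using emb_natmul[OF _ nf assms(9)] by blast
  have Rec: "\<And>z. Re (c * z) = r * Re z" by (simp add: c_def r_def)
  have tp': "totally_positive K (c * \<alpha>)"
    unfolding totally_positive_def
  proof (intro conjI ballI)
    show "c * \<alpha> \<in> K" using tp cK Kmul by (simp add: totally_positive_def)
    fix \<sigma> assume s: "\<sigma> \<in> embeddings K"
    then have h: "\<sigma> \<alpha> \<in> \<real>" "Re (\<sigma> \<alpha>) > 0" using tp by (auto simp: totally_positive_def)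
    have cr: "c \<in> \<real>" by (simp add: c_def)
    show "\<sigma> (c * \<alpha>) \<in> \<real>" using h cr by (simp add: embc[OF s])
    show "Re (\<sigma> (c * \<alpha>)) > 0" using h c0 unfolding embc[OF s] Rec by simp
  qed
  have qoL: "qorder K a b \<Lambda>" using assms(8) by (simp add: maximal_order_def)
  have Lsub: "\<Lambda> \<subseteq> qalg K" using qoL unfolding qorder_def qideal_def by blast
  have scL: "qscal (of_nat (Suc n)) \<beta> \<in> \<Lambda>" for n
  proof (induction n)
    case 0 then show ?case using \<beta>L by (simp add: qscal_one)
  next
    case (Suc n)
    have "qscal (of_nat (Suc (Suc n))) \<beta> = qadd (qscal (of_nat (Suc n)) \<beta>) \<beta>"
      by (simp add: qscal_def qadd_def qmk_def algebra_simps)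
    then show ?case using Suc \<beta>L qoL by (simp add: qorder_def)
  qed
  define \<beta>' where "\<beta>' = qscal c \<beta>"
  have \<beta>'L: "\<beta>' \<in> \<Lambda>" unfolding \<beta>'_def c_def using scL[of "l1 - 1"] assms(9) by simp
  have \<beta>u: "qunit K a b \<beta>" using \<beta>N by (simp add: normalizer_def)
  define yb where "yb = qinverse K a b \<beta>"
  have yb: "yb \<in> qalg K \<and> qmul a b \<beta> yb = qone \<and> qmul a b yb \<beta> = qone"
    using \<beta>u unfolding yb_def qinverse_def qunit_def by (metis (mono_tags, lifting) someI_ex)
  define y' where "y' = qscal (inverse c) yb"
  have y'K: "y' \<in> qalg K" using yb icK Kmul unfolding y'_def qalg_def qscal_def qmk_def by simp
  have \<beta>'K: "\<beta>' \<in> qalg K" using \<beta>'L Lsub by blast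
  have y'1: "qmul a b \<beta>' y' = qone" "qmul a b y' \<beta>' = qone"
    using yb c0 by (simp_all add: \<beta>'_def y'_def qmul_scal_l qmul_scal_r qscal_scal qscal_one)
  have \<beta>'u: "qunit K a b \<beta>'" unfolding qunit_def using \<beta>'K y'K y'1 by blast
  have inv': "qinverse K a b \<beta>' = y'"
  proof -
    have "\<exists>z. z \<in> qalg K \<and> qmul a b \<beta>' z = qone \<and> qmul a b z \<beta>' = qone" using y'K y'1 by blast
    then have z: "qinverse K a b \<beta>' \<in> qalg K \<and> qmul a b \<beta>' (qinverse K a b \<beta>') = qone"
      unfolding qinverse_def by (metis (mono_tags, lifting) someI_ex)
    have "y' = qmul a b y' (qmul a b \<beta>' (qinverse K a b \<beta>'))"
      using z by (simp add: qmul_one_r)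
    also have "\<dots> = qmul a b (qmul a b y' \<beta>') (qinverse K a b \<beta>')"
      by (simp add: qmul_assoc)
    also have "\<dots> = qinverse K a b \<beta>'" using y'1
      by (simp add: qmul_one_l)
    finally show ?thesis by simp
  qed
  have fn: "(\<lambda>l. qmul a b (qmul a b \<beta>' l) (qinverse K a b \<beta>')) = (\<lambda>l. qmul a b (qmul a b \<beta> l) (qinverse K a b \<beta>))"
    unfolding inv' using c0 by (simp add: y'_def yb_def \<beta>'_def qmul_scal_l qmul_scal_r qscal_scal qscal_one)
  have im: "(\<lambda>l. qmul a b (qmul a b \<beta>' l) (qinverse K a b \<beta>')) ` \<Lambda> = \<Lambda>"
  proof -
    have "(\<lambda>l. qmul a b (qmul a b \<beta> l) (qinverse K a b \<beta>)) ` \<Lambda> = \<Lambda>"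
      using \<beta>N unfolding normalizer_def by blast
    then show ?thesis by (simp only: fn)
  qed
  have \<beta>'N: "\<beta>' \<in> normalizer K a b \<Lambda>" using im \<beta>'u unfolding normalizer_def by blast
  have \<beta>'n: "qof (of_nat (l1\<^sup>2 * l2)) = qmul a b \<beta>' (qconj \<beta>')"
    by (simp add: \<beta>'_def qconj_scal qmul_scal_l qmul_scal_r qscal_scal \<beta>n[symmetric] qscal_qof c_def power2_eq_square mult.assoc)
  define \<gamma> where "\<gamma> = qmul a b (qmul a b (qconj t) \<beta>) (qinverse K a b (qconj t))"
  have \<gamma>': "qmul a b (qmul a b (qconj t) \<beta>') (qinverse K a b (qconj t)) = qscal c \<gamma>"
    by (simp add: \<gamma>_def \<beta>'_def qmul_scal_l qmul_scal_r)
  have io: "\<sigma> \<in> embeddings K \<Longrightarrow> iota K (qscal c \<gamma>) \<sigma> = qscal r (iota K \<gamma> \<sigma>)" for \<sigma>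
    unfolding iota_def qscal_def qmk_def by (simp only: if_True quat.simps embc Rec)
  have arm: "armul K a b X (iota K (qscal c \<gamma>)) = armul K a b (scX r X) (iota K \<gamma>)" for X
    by (rule ext) (simp add: armul_def io scX_def qmul_scal_l qmul_scal_r)
  have qf: "qform K a b (c * \<alpha>) X Y = qform K a b \<alpha> (scX r X) Y" for X Y
    unfolding qform_def
    by (rule sum.cong) (simp_all add: embc Rec scX_def qscal_scal, simp add: c_def r_def mult.commute)
  have ARsc: "scX r X \<in> AR K \<longleftrightarrow> X \<in> AR K" for X
  proof
    assume "scX r X \<in> AR K"
    then have "scX (inverse r) (scX r X) \<in> AR K" by (simp add: AR_def scX_def qscal_zero)
    then show "X \<in> AR K" using c0 by (simp add: scX_scX scX_one)
  qed (simp add: AR_def scX_def qscal_zero)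
  have ld: "X \<in> ldual K a b (c * \<alpha>) I \<longleftrightarrow> scX r X \<in> ldual K a b \<alpha> I" for X
    by (simp add: ldual_def qf ARsc)
  have eq': "iota K ` I = (\<lambda>X. armul K a b X (iota K (qmul a b (qmul a b (qconj t) \<beta>')
                                          (qinverse K a b (qconj t))))) ` ldual K a b (c * \<alpha>) I"
  proof -
    have "(\<lambda>X. armul K a b X (iota K (qscal c \<gamma>))) ` ldual K a b (c * \<alpha>) I
        = (\<lambda>X. armul K a b X (iota K \<gamma>)) ` ldual K a b \<alpha> I"
    proof (rule set_eqI, rule iffI)
      fix Z assume "Z \<in> (\<lambda>X. armul K a b X (iota K (qscal c \<gamma>))) ` ldual K a b (c * \<alpha>) I"
      then obtain X where "X \<in> ldual K a b (c * \<alpha>) I" "Z = armul K a b X (iota K (qscal c \<gamma>))" by blast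
      then show "Z \<in> (\<lambda>X. armul K a b X (iota K \<gamma>)) ` ldual K a b \<alpha> I"
        using ld arm by blast
    next
      fix Z assume "Z \<in> (\<lambda>X. armul K a b X (iota K \<gamma>)) ` ldual K a b \<alpha> I"
      then obtain Y where Y: "Y \<in> ldual K a b \<alpha> I" "Z = armul K a b Y (iota K \<gamma>)" by blast
      define X where "X = scX (inverse r) Y"
      have sX: "scX r X = Y" using c0 by (simp add: X_def scX_scX scX_one)
      show "Z \<in> (\<lambda>X. armul K a b X (iota K (qscal c \<gamma>))) ` ldual K a b (c * \<alpha>) I"
        using Y sX ld[of X] arm[of X] by (metis image_eqI)
    qed
    then show ?thesis using eq \<gamma>' by (simp add: \<gamma>_def)
  qed
  have "arakelov_modular K a b \<Lambda> (c * \<alpha>) I (l1\<^sup>2 * l2)"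
    unfolding arakelov_modular_def
    using assms(9,10) tp' J t IJ \<beta>'N \<beta>'L \<beta>'n eq' by auto
  then show ?thesis by blast
qed

end
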